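(* Let $1\le\ell\le k-1$ be integers with $k-\ell$ not dividing $k$, and let $m\ge\lceil k/(k-\ell)\rceil$ be an integer. Then the $k$-uniform $\ell$-cycle $C$ with $k^2\ell+m$ edges is $k$-partite. Moreover, if $m=\lceil k/(k-\ell)\rceil$, then $\gcd(C)=1$.
   Context: A ($k$-uniform) $\ell$-cycle is a $k$-graph whose vertices can be cyclically ordered so that every edge consists of $k$ cyclically consecutive vertices and consecutive edges intersect in exactly $\ell$ vertices; with $e$ edges it has $e(k-\ell)$ vertices. A $k$-graph is $k$-partite if its vertex set can be partitioned into $k$ parts so that every edge has exactly one vertex in each part. A proper $t$-colouring of a $k$-graph $F$ assigns to each vertex one of the colours $1,\dots,t$ so that no edge contains two vertices of the same colour; $\chi(F)$ is the least $t$ admitting a proper $t$-colouring. $\mathcal{D}(F)\subseteq\mathbb{N}_0$ is the set of integers $\big||\phi^{-1}(1)|-|\phi^{-1}(2)|\big|$ over all proper $\chi(F)$-colourings $\phi$ of $F$, and $\gcd(F)$ is the greatest common divisor of the elements of $\mathcal{D}(F)\setminus\{0\}$, with $\gcd(F)=\infty$ if $\mathcal{D}(F)=\{0\}$. *)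

theory Defs
  imports Main "HOL-Library.Extended_Nat"
begin

definition cycle_vertices :: "nat \<Rightarrow> nat \<Rightarrow> nat \<Rightarrow> nat set" where
  "cycle_vertices k l e = {..<e * (k - l)}"

definition cycle_edges :: "nat \<Rightarrow> nat \<Rightarrow> nat \<Rightarrow> nat set set" where
  "cycle_edges k l e =
     {{(i * (k - l) + j) mod (e * (k - l)) | j. j < k} | i. i < e}"

definition k_partite :: "'a set \<Rightarrow> 'a set set \<Rightarrow> nat \<Rightarrow> bool" where
  "k_partite V E k \<longleftrightarrow>
     (\<exists>f. f ` V \<subseteq> {..<k} \<and> (\<forall>X\<in>E. \<forall>p<k. card {v\<in>X. f v = p} = 1))"

definition proper_colouring :: "'a set \<Rightarrow> 'a set set \<Rightarrow> nat \<Rightarrow> ('a \<Rightarrow> nat) \<Rightarrow> bool" where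
  "proper_colouring V E t \<phi> \<longleftrightarrow>
     \<phi> ` V \<subseteq> {1..t} \<and> (\<forall>X\<in>E. \<forall>u\<in>X. \<forall>v\<in>X. u \<noteq> v \<longrightarrow> \<phi> u \<noteq> \<phi> v)"

definition chromatic_number :: "'a set \<Rightarrow> 'a set set \<Rightarrow> nat" where
  "chromatic_number V E = (LEAST t. \<exists>\<phi>. proper_colouring V E t \<phi>)"

definition colour_diffs :: "'a set \<Rightarrow> 'a set set \<Rightarrow> nat set" where
  "colour_diffs V E =
     {nat \<bar>int (card {v\<in>V. \<phi> v = 1}) - int (card {v\<in>V. \<phi> v = 2})\<bar> | \<phi>.
        proper_colouring V E (chromatic_number V E) \<phi>}"

definition hgcd :: "'a set \<Rightarrow> 'a set set \<Rightarrow> enat" where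
  "hgcd V E = (if colour_diffs V E - {0} = {} then \<infinity>
               else enat (Gcd (colour_diffs V E - {0})))"

end

theory Submission
  imports Defs
begin


lemma win_mem_long:
  fixes b d i q r x :: nat
  assumes "x < r" "r < d"
  shows "(i*d \<le> b*d + x \<and> b*d + x < i*d + (q*d + r)) \<longleftrightarrow> (i \<le> b \<and> b \<le> i + q)"
proof
  assume h: "i*d \<le> b*d + x \<and> b*d + x < i*d + (q*d + r)"
  have "i \<le> b"
  proof (rule ccontr)
    assume "\<not> i \<le> b" then have "Suc b \<le> i" by simp
    then have "Suc b * d \<le> i * d" by (rule mult_le_mono1)
    then show False using h assms by simp
  qed
  moreover have "b \<le> i + q"
  proof (rule ccontr)
    assume "\<not> b \<le> i + q" then have "Suc (i+q) \<le> b" by simp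
    then have "Suc (i+q) * d \<le> b * d" by (rule mult_le_mono1)
    then show False using h assms by (simp add: algebra_simps)
  qed
  ultimately show "i \<le> b \<and> b \<le> i + q" by simp
next
  assume h: "i \<le> b \<and> b \<le> i + q"
  have h1: "i*d \<le> b*d" using h by simp
  have "b*d \<le> (i+q)*d" using h by (intro mult_le_mono1) simp
  then have h2: "b*d \<le> i*d + q*d" by (simp add: add_mult_distrib)
  show "i*d \<le> b*d + x \<and> b*d + x < i*d + (q*d + r)" using assms h1 h2 by linarith
qed

lemma win_mem_short:
  fixes b d i q r x :: nat
  assumes "r \<le> x" "x < d"
  shows "(i*d \<le> b*d + x \<and> b*d + x < i*d + (q*d + r)) \<longleftrightarrow> (i \<le> b \<and> b < i + q)"
proof
  assume h: "i*d \<le> b*d + x \<and> b*d + x < i*d + (q*d + r)"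
  have "i \<le> b"
  proof (rule ccontr)
    assume "\<not> i \<le> b" then have "Suc b \<le> i" by simp
    then have "Suc b * d \<le> i * d" by (rule mult_le_mono1)
    then show False using h assms by simp
  qed
  moreover have "b < i + q"
  proof (rule ccontr)
    assume "\<not> b < i + q" then have "(i+q) \<le> b" by simp
    then have "(i+q) * d \<le> b * d" by (rule mult_le_mono1)
    then show False using h assms by (simp add: algebra_simps)
  qed
  ultimately show "i \<le> b \<and> b < i + q" by simp
next
  assume h: "i \<le> b \<and> b < i + q"
  have h1: "i*d \<le> b*d" using h by simp
  have "Suc b*d \<le> (i+q)*d" using h by (intro mult_le_mono1) simp
  then have h2: "b*d + d \<le> i*d + q*d" by (simp add: add_mult_distrib)
  show "i*d \<le> b*d + x \<and> b*d + x < i*d + (q*d + r)" using assms h1 h2 by linarith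
qed

definition Ssum :: "(nat \<Rightarrow> nat) \<Rightarrow> nat \<Rightarrow> nat" where
  "Ssum len t = (\<Sum>u<t. len u)"

definition zpos :: "nat \<Rightarrow> (nat \<Rightarrow> nat) \<Rightarrow> (nat \<Rightarrow> nat) \<Rightarrow> nat \<Rightarrow> nat" where
  "zpos d len off t = (Ssum len (Suc t) - 1) * d + off t"

lemma Ssum_Suc: "Ssum len (Suc t) = Ssum len t + len t"
  by (simp add: Ssum_def)

lemma Ssum_mono: "t \<le> t' \<Longrightarrow> Ssum len t \<le> Ssum len t'"
  unfolding Ssum_def by (rule sum_mono2) auto

lemma Ssum_ge: assumes "\<And>t. 0 < len t" shows "t \<le> Ssum len t"
proof (induction t)
  case (Suc t) then show ?case using assms[of t] by (simp add: Ssum_Suc)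
qed (simp add: Ssum_def)

locale zsetup =
  fixes k d q r :: nat and len off :: "nat \<Rightarrow> nat"
  assumes k: "k = q*d + r" and r: "0 < r" "r < d" and q: "0 < q"
    and len: "\<And>t. len t = q \<or> len t = Suc q"
    and offL: "\<And>t. len t = Suc q \<Longrightarrow> off t < r"
    and offS: "\<And>t. len t = q \<Longrightarrow> r \<le> off t \<and> off t < d"
begin

abbreviation "S \<equiv> Ssum len"
abbreviation "z \<equiv> zpos d len off"

lemma len_pos: "0 < len t" using len[of t] q by auto

lemma off_lt: "off t < d" using len[of t] offL[of t] offS[of t] r by auto

lemma z_in_win: "(i*d \<le> z t \<and> z t < i*d + k) \<longleftrightarrow> (S t \<le> i \<and> i < S (Suc t))"
proof (cases "len t = Suc q")
  case True
  have "z t = (S t + q) * d + off t" unfolding zpos_def using True by (simp add: Ssum_Suc)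
  then show ?thesis using win_mem_long[OF offL[OF True] r(2), of i "S t + q" q] k True
    by (auto simp: Ssum_Suc)
next
  case False
  then have F: "len t = q" using len[of t] by auto
  have "z t = (S t + q - 1) * d + off t" unfolding zpos_def using F by (simp add: Ssum_Suc)
  then show ?thesis using win_mem_short[of r "off t" d i "S t + q - 1" q] offS[OF F] k F q
    by (auto simp: Ssum_Suc)
qed

lemma z_smono: "strict_mono z"
unfolding strict_mono_Suc_iff
proof
  fix t
  have a: "z t < S (Suc t) * d"
  proof -
    have "S (Suc t) \<ge> 1" using len_pos[of t] by (simp add: Ssum_Suc)
    then have "S (Suc t) * d = (S (Suc t) - 1) * d + d"
      by (cases "S (Suc t)") auto
    then show ?thesis unfolding zpos_def using off_lt[of t] by simp
  qed
  have "S (Suc (Suc t)) - 1 \<ge> S (Suc t)"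
    using len_pos[of "Suc t"] by (simp add: Ssum_Suc)
  then have "S (Suc t) * d \<le> (S (Suc (Suc t)) - 1) * d" by (rule mult_le_mono1)
  then have "S (Suc t) * d \<le> z (Suc t)" unfolding zpos_def by linarith
  with a show "z t < z (Suc t)" by simp
qed

lemma win_unique_t: "\<exists>!t. S t \<le> i \<and> i < S (Suc t)"
proof -
  have ex: "\<exists>t. i < S (Suc t)"
    using Ssum_ge[of len, OF len_pos, of "Suc i"] by (intro exI[of _ i]) simp
  define t0 where "t0 = (LEAST t. i < S (Suc t))"
  have t0a: "i < S (Suc t0)" unfolding t0_def using ex by (rule LeastI_ex)
  have t0b: "S t0 \<le> i"
  proof (cases t0)
    case 0 then show ?thesis by (simp add: Ssum_def)
  next
    case (Suc t')
    then have "\<not> i < S (Suc t')" unfolding t0_def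
      by (metis Suc lessI not_less_Least t0_def)
    then show ?thesis using Suc by simp
  qed
  show ?thesis
  proof (rule ex1I[of _ t0])
    show "S t0 \<le> i \<and> i < S (Suc t0)" using t0a t0b by simp
  next
    fix t assume h: "S t \<le> i \<and> i < S (Suc t)"
    show "t = t0"
    proof (rule ccontr)
      assume "t \<noteq> t0"
      then have "t < t0 \<or> t0 < t" by auto
      then show False
      proof
        assume "t < t0" then have "S (Suc t) \<le> S t0" by (intro Ssum_mono) simp
        then show False using h t0b by simp
      next
        assume "t0 < t" then have "S (Suc t0) \<le> S t" by (intro Ssum_mono) simp
        then show False using h t0a by simp
      qed
    qed
  qed
qed

lemma win_card: "card {v \<in> {i*d..<i*d+k}. v \<in> range z} = 1"
proof -
  obtain t0 where t0: "S t0 \<le> i \<and> i < S (Suc t0)"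
    and u: "\<And>t. S t \<le> i \<and> i < S (Suc t) \<Longrightarrow> t = t0"
    using win_unique_t[of i] by blast
  have "{v \<in> {i*d..<i*d+k}. v \<in> range z} = {z t0}"
  proof safe
    fix v t assume "z t \<in> {i*d..<i*d+k}"
    then have "S t \<le> i \<and> i < S (Suc t)" using z_in_win[of i t] by simp
    then show "z t = z t0" using u by simp
  next
    show "z t0 \<in> {i*d..<i*d+k}" using z_in_win[of i t0] t0 by simp
  qed auto
  then show ?thesis by simp
qed

end

locale zper = zsetup +
  fixes N e :: nat
  assumes N_pos: "0 < N" and len_per: "\<And>t. len (t + N) = len t"
    and off_per: "\<And>t. off (t + N) = off t" and SN: "Ssum len N = e"
begin

lemma S_per: "S (t + N) = S t + e"
proof (induction t)
  case 0 then show ?case using SN by (simp add: Ssum_def)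
next
  case (Suc t)
  have "S (Suc t + N) = S (t + N) + len (t + N)" by (simp add: Ssum_Suc)
  then show ?case using Suc len_per by (simp add: Ssum_Suc)
qed

lemma z_per: "z (t + N) = z t + e*d"
proof -
  have "S (Suc t) \<ge> 1" using len_pos[of t] by (simp add: Ssum_Suc)
  moreover have "S (Suc t + N) = S (Suc t) + e" by (rule S_per)
  ultimately have "S (Suc (t + N)) - 1 = (S (Suc t) - 1) + e" by simp
  then show ?thesis unfolding zpos_def using off_per[of t] by (simp add: add_mult_distrib)
qed

lemma z_lt: assumes "t < N" shows "z t < e*d"
proof -
  have "S (Suc t) \<ge> 1" using len_pos[of t] by (simp add: Ssum_Suc)
  then have "S (Suc t) * d = (S (Suc t) - 1) * d + d" by (cases "S (Suc t)") auto
  then have "z t < S (Suc t) * d" unfolding zpos_def using off_lt[of t] by simp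
  also have "S (Suc t) * d \<le> e * d" using Ssum_mono[of "Suc t" N len] assms SN
    by (intro mult_le_mono1) simp
  finally show ?thesis .
qed

lemma z_ge: assumes "N \<le> t" shows "e*d \<le> z t"
proof -
  have "z t = z (t - N) + e*d" using z_per[of "t - N"] assms by simp
  then show ?thesis by simp
qed

lemma range_per: "(v + e*d \<in> range z) = (v \<in> range z)"
proof
  assume "v + e*d \<in> range z"
  then obtain t where t: "v + e*d = z t" by auto
  then have "N \<le> t" using z_lt[of t] by (cases "t < N") auto
  then have "z t = z (t - N) + e*d" using z_per[of "t - N"] by simp
  then show "v \<in> range z" using t by auto
next
  assume "v \<in> range z"
  then obtain t where "v = z t" by auto
  then have "v + e*d = z (t + N)" using z_per by simp
  then show "v + e*d \<in> range z" by auto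
qed

lemma card_per: "card {v \<in> {..<e*d}. v \<in> range z} = N"
proof -
  have "{v \<in> {..<e*d}. v \<in> range z} = z ` {..<N}"
  proof
    show "{v \<in> {..<e*d}. v \<in> range z} \<subseteq> z ` {..<N}"
    proof
      fix v assume v: "v \<in> {v \<in> {..<e*d}. v \<in> range z}"
      then obtain t where t: "v = z t" by auto
      have "t < N" using z_ge[of t] v t by (cases "N \<le> t") auto
      then show "v \<in> z ` {..<N}" using t by auto
    qed
    show "z ` {..<N} \<subseteq> {v \<in> {..<e*d}. v \<in> range z}" using z_lt by auto
  qed
  moreover have "inj z" using z_smono by (rule strict_mono_imp_inj_on)
  ultimately show ?thesis by (simp add: card_image inj_on_subset[of z UNIV])
qed

lemma z_div: "z t div d = S (Suc t) - 1" and z_mod: "z t mod d = off t"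
  unfolding zpos_def using off_lt[of t] r by auto

end



lemma card_mod_class:
  fixes m c j :: nat assumes "c < m"
  shows "card {x \<in> {..<j*m}. x mod m = c} = j"
proof (induction j)
  case 0 then show ?case by simp
next
  case (Suc j)
  have "{x \<in> {..<Suc j*m}. x mod m = c} = {x \<in> {..<j*m}. x mod m = c} \<union> {j*m + c}"
  proof
    show "{x \<in> {..<Suc j*m}. x mod m = c} \<subseteq> {x \<in> {..<j*m}. x mod m = c} \<union> {j*m + c}"
    proof
      fix x assume x: "x \<in> {x \<in> {..<Suc j*m}. x mod m = c}"
      show "x \<in> {x \<in> {..<j*m}. x mod m = c} \<union> {j*m + c}"
      proof (cases "x < j*m")
        case True then show ?thesis using x by simp
      next
        case False
        then have h: "j*m \<le> x" "x < j*m + m" using x by auto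
        define y where "y = x - j*m"
        have xy: "x = j*m + y" "y < m" using h unfolding y_def by auto
        then have "x mod m = y" by simp
        then show ?thesis using x xy by simp
      qed
    qed
    show "{x \<in> {..<j*m}. x mod m = c} \<union> {j*m + c} \<subseteq> {x \<in> {..<Suc j*m}. x mod m = c}"
      using assms by auto
  qed
  moreover have "j*m + c \<notin> {..<j*m}" by simp
  ultimately show ?case using Suc by simp
qed

lemma mod_add_pos_neq:
  fixes a D m :: nat assumes "0 < D" "D < m"
  shows "(a + D) mod m \<noteq> a mod m"
proof
  assume "(a + D) mod m = a mod m"
  then have "m dvd (a + D) - a" using mod_eq_dvd_iff_nat[of a "a + D" m] by simp
  then have "m dvd D" by simp
  then show False using assms by (simp add: nat_dvd_not_less)
qed

locale spcol =
  fixes n s k d :: nat and sp :: "nat \<Rightarrow> bool" and lab :: "nat \<Rightarrow> nat"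
  assumes n_pos: "0 < n" and sk: "s < k"
    and per: "\<And>v. sp (v + n) = sp v"
    and perl: "\<And>v. sp v \<Longrightarrow> lab (v + n) = lab v"
    and labs: "\<And>v. sp v \<Longrightarrow> lab v < s"
    and wnd: "\<And>i a. a < s \<Longrightarrow> card {v \<in> {i*d..<i*d+k}. sp v \<and> lab v = a} = 1"
    and dv: "(k - s) dvd (n - card {v \<in> {..<n}. sp v})"
begin

definition rk :: "nat \<Rightarrow> nat" where "rk v = card {u \<in> {..<v}. \<not> sp u}"
definition F :: "nat \<Rightarrow> nat" where "F v = (if sp v then lab v else s + rk v mod (k - s))"
definition M :: nat where "M = card {u \<in> {..<n}. \<not> sp u}"

lemma M_eq: "M = n - card {v \<in> {..<n}. sp v}"
proof -
  have "{u \<in> {..<n}. \<not> sp u} = {..<n} - {v \<in> {..<n}. sp v}" by auto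
  moreover have "card ({..<n} - {v \<in> {..<n}. sp v}) = n - card {v \<in> {..<n}. sp v}"
    by (subst card_Diff_subset) auto
  ultimately show ?thesis unfolding M_def by simp
qed

lemma dvM: "(k - s) dvd M" using dv M_eq by simp

lemma F_lt: "F v < k"
proof -
  have "rk v mod (k - s) < k - s" using sk by simp
  then show ?thesis unfolding F_def using labs[of v] sk by (auto simp: less_diff_conv)
qed

lemma rk_split: assumes "u \<le> v"
  shows "rk v = rk u + card {w \<in> {u..<v}. \<not> sp w}"
proof -
  have "{w \<in> {..<v}. \<not> sp w} = {w \<in> {..<u}. \<not> sp w} \<union> {w \<in> {u..<v}. \<not> sp w}"
    using assms by auto
  moreover have "card ({w \<in> {..<u}. \<not> sp w} \<union> {w \<in> {u..<v}. \<not> sp w}) =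
      card {w \<in> {..<u}. \<not> sp w} + card {w \<in> {u..<v}. \<not> sp w}"
    by (rule card_Un_disjoint) auto
  ultimately show ?thesis unfolding rk_def by simp
qed

lemma rk_per: "rk (v + n) = rk v + M"
proof -
  have "rk (v + n) = rk n + card {w \<in> {n..<v+n}. \<not> sp w}" by (rule rk_split) simp
  moreover have "rk n = M" unfolding rk_def M_def by simp
  moreover have "{w \<in> {n..<v+n}. \<not> sp w} = (\<lambda>u. u + n) ` {u \<in> {..<v}. \<not> sp u}"
  proof safe
    fix w assume "w \<in> {n..<v+n}" "\<not> sp w"
    then show "w \<in> (\<lambda>u. u + n) ` {u \<in> {..<v}. \<not> sp u}"
      using per[of "w - n"] by (intro image_eqI[of _ _ "w - n"]) auto
  qed (auto simp: per)
  then have "card {w \<in> {n..<v+n}. \<not> sp w} = rk v"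
    unfolding rk_def by (simp add: card_image inj_on_def)
  ultimately show ?thesis by simp
qed

lemma F_per: "F (v + n) = F v"
proof (cases "sp v")
  case True then show ?thesis unfolding F_def using per perl by simp
next
  case False
  have "(rk v + M) mod (k - s) = rk v mod (k - s)" using dvM by auto
  then show ?thesis unfolding F_def using False per rk_per by simp
qed

lemma win_sp_card: "card {w \<in> {i*d..<i*d+k}. sp w} = s"
proof -
  have "{w \<in> {i*d..<i*d+k}. sp w} = (\<Union>a\<in>{..<s}. {w \<in> {i*d..<i*d+k}. sp w \<and> lab w = a})"
    using labs by auto
  moreover have "card (\<Union>a\<in>{..<s}. {w \<in> {i*d..<i*d+k}. sp w \<and> lab w = a}) =
      (\<Sum>a<s. card {w \<in> {i*d..<i*d+k}. sp w \<and> lab w = a})"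
    by (rule card_UN_disjoint) auto
  moreover have "(\<Sum>a<s. card {w \<in> {i*d..<i*d+k}. sp w \<and> lab w = a}) = (\<Sum>a<s. 1)"
    by (rule sum.cong[OF refl]) (rule wnd, simp)
  ultimately show ?thesis by simp
qed

lemma win_nsp_card: "card {w \<in> {i*d..<i*d+k}. \<not> sp w} = k - s"
proof -
  have "{w \<in> {i*d..<i*d+k}. \<not> sp w} = {i*d..<i*d+k} - {w \<in> {i*d..<i*d+k}. sp w}" by auto
  moreover have "card ({i*d..<i*d+k} - {w \<in> {i*d..<i*d+k}. sp w}) = k - card {w \<in> {i*d..<i*d+k}. sp w}"
    by (subst card_Diff_subset) auto
  ultimately show ?thesis using win_sp_card[of i] by simp
qed

lemma F_inj: "inj_on F {i*d..<i*d+k}"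
proof -
  have key: "F u \<noteq> F v" if uv: "u \<in> {i*d..<i*d+k}" "v \<in> {i*d..<i*d+k}" "u < v" for u v
  proof (cases "sp u")
    case su: True
    show ?thesis
    proof (cases "sp v")
      case sv: True
      show ?thesis
      proof
        assume "F u = F v"
        then have eq: "lab u = lab v" using su sv unfolding F_def by simp
        have "card {w \<in> {i*d..<i*d+k}. sp w \<and> lab w = lab u} = 1" using wnd labs su by simp
        then obtain x where "{w \<in> {i*d..<i*d+k}. sp w \<and> lab w = lab u} = {x}"
          by (rule card_1_singletonE)
        moreover have "u \<in> {w \<in> {i*d..<i*d+k}. sp w \<and> lab w = lab u}" using uv su by simp
        moreover have "v \<in> {w \<in> {i*d..<i*d+k}. sp w \<and> lab w = lab u}" using uv sv eq by simp
        ultimately have "u = x" "v = x" by blast+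
        then show False using \<open>u < v\<close> by simp
      qed
    next
      case sv: False
      then show ?thesis using su labs[of u] unfolding F_def by auto
    qed
  next
    case su: False
    show ?thesis
    proof (cases "sp v")
      case sv: True
      then show ?thesis using su labs[of v] unfolding F_def by auto
    next
      case sv: False
      define D where "D = card {w \<in> {u..<v}. \<not> sp w}"
      have rv: "rk v = rk u + D" unfolding D_def using uv by (intro rk_split) simp
      have "u \<in> {w \<in> {u..<v}. \<not> sp w}" using su uv by simp
      then have D1: "0 < D" unfolding D_def by (auto simp: card_gt_0_iff)
      have "{w \<in> {u..<v}. \<not> sp w} \<subseteq> {w \<in> {i*d..<i*d+k}. \<not> sp w} - {v}"
      proof
        fix w assume "w \<in> {w \<in> {u..<v}. \<not> sp w}"
        then show "w \<in> {w \<in> {i*d..<i*d+k}. \<not> sp w} - {v}" using uv(1,2) by simp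
      qed
      moreover have "finite ({w \<in> {i*d..<i*d+k}. \<not> sp w} - {v})" by simp
      ultimately have "D \<le> card ({w \<in> {i*d..<i*d+k}. \<not> sp w} - {v})" unfolding D_def
        by (rule card_mono[rotated])
      also have "\<dots> = card {w \<in> {i*d..<i*d+k}. \<not> sp w} - 1"
        using uv(2) sv by (intro card_Diff_singleton) simp
      also have "\<dots> = k - s - 1" using win_nsp_card[of i] by simp
      finally have D2: "D < k - s" using D1 by linarith
      have "(rk u + D) mod (k - s) \<noteq> rk u mod (k - s)" using D1 D2 by (rule mod_add_pos_neq)
      then show ?thesis using su sv rv unfolding F_def by simp
    qed
  qed
  show ?thesis unfolding inj_on_def
  proof (intro ballI impI)
    fix u v assume "u \<in> {i*d..<i*d+k}" "v \<in> {i*d..<i*d+k}" "F u = F v"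
    then show "u = v" using key[of u v] key[of v u] by (cases u v rule: linorder_cases) auto
  qed
qed

lemma count_sp: "a < s \<Longrightarrow> card {v \<in> {..<n}. F v = a} = card {v \<in> {..<n}. sp v \<and> lab v = a}"
  unfolding F_def by (rule arg_cong[where f=card]) auto

lemma rk_bij: "bij_betw rk {v \<in> {..<n}. \<not> sp v} {..<M}"
proof -
  let ?A = "{v \<in> {..<n}. \<not> sp v}"
  have mono: "rk u < rk v" if "u < v" "\<not> sp u" for u v
  proof -
    have "rk v = rk u + card {w \<in> {u..<v}. \<not> sp w}" using that by (intro rk_split) simp
    moreover have "u \<in> {w \<in> {u..<v}. \<not> sp w}" using that by simp
    then have "0 < card {w \<in> {u..<v}. \<not> sp w}" by (auto simp: card_gt_0_iff)
    ultimately show ?thesis by simp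
  qed
  have inj: "inj_on rk ?A"
  proof (rule inj_onI)
    fix u v assume u: "u \<in> ?A" and v: "v \<in> ?A" and eq: "rk u = rk v"
    show "u = v"
    proof (cases u v rule: linorder_cases)
      case less then show ?thesis using mono[of u v] u eq by simp
    next
      case greater then show ?thesis using mono[of v u] v eq by simp
    qed simp
  qed
  have sub: "rk ` ?A \<subseteq> {..<M}"
  proof
    fix x assume "x \<in> rk ` ?A"
    then obtain v where v: "v \<in> ?A" "x = rk v" by auto
    have "rk n = rk v + card {w \<in> {v..<n}. \<not> sp w}" using v by (intro rk_split) simp
    moreover have "v \<in> {w \<in> {v..<n}. \<not> sp w}" using v by simp
    then have "0 < card {w \<in> {v..<n}. \<not> sp w}" by (auto simp: card_gt_0_iff)
    moreover have "rk n = M" unfolding rk_def M_def by simp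
    ultimately show "x \<in> {..<M}" using v by simp
  qed
  have "card (rk ` ?A) = M" using inj unfolding M_def by (simp add: card_image)
  then have "rk ` ?A = {..<M}" using sub by (intro card_subset_eq) auto
  then show ?thesis using inj unfolding bij_betw_def by simp
qed

lemma count_rest: assumes "c < k - s"
  shows "card {v \<in> {..<n}. F v = s + c} = M div (k - s)"
proof -
  have "{v \<in> {..<n}. F v = s + c} = {v \<in> {v \<in> {..<n}. \<not> sp v}. rk v mod (k - s) = c}"
  proof (rule set_eqI, rule iffI)
    fix v assume "v \<in> {v \<in> {..<n}. F v = s + c}"
    then show "v \<in> {v \<in> {v \<in> {..<n}. \<not> sp v}. rk v mod (k - s) = c}"
      unfolding F_def using labs[of v] by (auto split: if_splits)
  next
    fix v assume "v \<in> {v \<in> {v \<in> {..<n}. \<not> sp v}. rk v mod (k - s) = c}"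
    then show "v \<in> {v \<in> {..<n}. F v = s + c}" unfolding F_def by auto
  qed
  also have "card \<dots> = card {x \<in> {..<M}. x mod (k - s) = c}"
  proof -
    have "bij_betw rk {v \<in> {v \<in> {..<n}. \<not> sp v}. rk v mod (k - s) = c} {x \<in> {..<M}. x mod (k - s) = c}"
      using rk_bij unfolding bij_betw_def inj_on_def by auto
    then show ?thesis by (rule bij_betw_same_card)
  qed
  also have "\<dots> = M div (k - s)"
  proof -
    obtain j where "M = (k - s) * j" using dvM by (rule dvdE)
    then have "M = j * (k - s)" by (simp add: mult.commute)
    then show ?thesis using card_mod_class[OF assms, of j] assms by simp
  qed
  finally show ?thesis .
qed

end



lemma per_mod: fixes F :: "nat \<Rightarrow> nat" assumes "\<And>v. F (v + n) = F v" shows "F (x mod n) = F x"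
proof -
  have "\<And>j. F (y + j*n) = F y" for y
  proof -
    fix j show "F (y + j*n) = F y"
    proof (induction j)
      case (Suc j)
      have "y + Suc j * n = (y + j*n) + n" by simp
      then have "F (y + Suc j * n) = F ((y + j*n) + n)" by (rule arg_cong)
      also have "\<dots> = F (y + j*n)" by (rule assms)
      finally show ?case using Suc.IH by simp
    qed simp
  qed
  then have "F (x mod n + (x div n) * n) = F (x mod n)" .
  moreover have "x mod n + (x div n) * n = x" by (rule mod_div_mult_eq)
  ultimately show ?thesis by simp
qed

lemma edge_eq: "cycle_edges k l e = {(\<lambda>j. (i*(k-l)+j) mod (e*(k-l))) ` {..<k} | i. i < e}"
  unfolding cycle_edges_def by (auto simp: image_def)

locale hgcol =
  fixes k l e :: nat and F :: "nat \<Rightarrow> nat"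
  assumes kn: "k \<le> e*(k-l)" and kpos: "0 < k"
    and Fper: "\<And>v. F (v + e*(k-l)) = F v"
    and Flt: "\<And>v. F v < k"
    and Finj: "\<And>i. i < e \<Longrightarrow> inj_on F {i*(k-l)..<i*(k-l)+k}"
begin

abbreviation "d \<equiv> k - l"
abbreviation "n \<equiv> e*(k-l)"
abbreviation "g i \<equiv> (\<lambda>j. (i*d+j) mod n)"

lemma g_inj: "inj_on (g i) {..<k}"
proof (rule inj_onI)
  fix x y assume "x \<in> {..<k}" "y \<in> {..<k}" "g i x = g i y"
  then have "(i*d + x) mod n = (i*d + y) mod n" "x < n" "y < n" using kn by auto
  then have eq: "(i*d + x) mod n = (i*d + y) mod n" and xy: "x < n" "y < n" by auto
  show "x = y"
  proof (cases "x \<le> y")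
    case True
    then have "n dvd (i*d + y) - (i*d + x)" using mod_eq_dvd_iff_nat[of "i*d+x" "i*d+y" n] eq by simp
    then have "n dvd y - x" by simp
    moreover have "y - x < n" using xy by simp
    ultimately have "y - x = 0" by (metis nat_dvd_not_less neq0_conv)
    then show ?thesis using True by simp
  next
    case False
    then have "n dvd (i*d + x) - (i*d + y)" using mod_eq_dvd_iff_nat[of "i*d+y" "i*d+x" n] eq by simp
    then have "n dvd x - y" by simp
    moreover have "x - y < n" using xy by simp
    ultimately have "x - y = 0" by (metis nat_dvd_not_less neq0_conv)
    then show ?thesis using False by simp
  qed
qed

lemma Fg: "F (g i j) = F (i*d + j)"
  using per_mod[of F n, OF Fper] by simp

lemma Fw_bij: assumes "i < e" shows "bij_betw (\<lambda>j. F (i*d + j)) {..<k} {..<k}"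
proof -
  have inj: "inj_on (\<lambda>j. F (i*d + j)) {..<k}"
  proof (rule inj_onI)
    fix x y assume "x \<in> {..<k}" "y \<in> {..<k}" "F (i*d + x) = F (i*d + y)"
    then show "x = y" using inj_onD[OF Finj[OF assms], of "i*d+x" "i*d+y"] by simp
  qed
  moreover have "(\<lambda>j. F (i*d + j)) ` {..<k} = {..<k}"
    using inj Flt by (intro card_subset_eq) (auto simp: card_image)
  ultimately show ?thesis unfolding bij_betw_def by simp
qed

lemma edge_card: assumes "X \<in> cycle_edges k l e" "p < k"
  shows "card {v \<in> X. F v = p} = 1"
proof -
  obtain i where i: "i < e" and X: "X = g i ` {..<k}" using assms(1) unfolding edge_eq by auto
  have "p \<in> (\<lambda>j. F (i*d + j)) ` {..<k}" using Fw_bij[OF i] assms(2) unfolding bij_betw_def by simp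
  then obtain j where j: "j < k" "F (i*d + j) = p" by auto
  have "{v \<in> X. F v = p} = {g i j}"
  proof
    show "{g i j} \<subseteq> {v \<in> X. F v = p}" using X j Fg by auto
    show "{v \<in> X. F v = p} \<subseteq> {g i j}"
    proof
      fix v assume "v \<in> {v \<in> X. F v = p}"
      then have v: "v \<in> X" "F v = p" by auto
      then obtain j' where j': "j' < k" "v = g i j'" using X by auto
      then have "F (i*d + j') = p" using v Fg by simp
      then have "j' = j" using inj_onD[OF bij_betw_imp_inj_on[OF Fw_bij[OF i]], of j' j] j j' by simp
      then show "v \<in> {g i j}" using j' by simp
    qed
  qed
  then show ?thesis by simp
qed

lemma kpart: "k_partite (cycle_vertices k l e) (cycle_edges k l e) k"
proof -
  have A: "F ` cycle_vertices k l e \<subseteq> {..<k}" using Flt by auto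
  have B: "\<forall>X\<in>cycle_edges k l e. \<forall>p<k. card {v\<in>X. F v = p} = 1" using edge_card by blast
  show ?thesis unfolding k_partite_def by (intro exI[of _ F] conjI; fact A B)
qed

lemma edge_dist: assumes "X \<in> cycle_edges k l e" "u \<in> X" "v \<in> X" "u \<noteq> v"
  shows "F u \<noteq> F v"
proof
  assume eq: "F u = F v"
  have "card {w \<in> X. F w = F u} = 1" using edge_card[OF assms(1) Flt] by simp
  then obtain x where "{w \<in> X. F w = F u} = {x}" by (rule card_1_singletonE)
  moreover have "u \<in> {w \<in> X. F w = F u}" "v \<in> {w \<in> X. F w = F u}" using assms eq by auto
  ultimately have "u = x" "v = x" by blast+
  then show False using assms(4) by simp
qed

lemma proper: assumes "inj_on h {..<k}" "h ` {..<k} \<subseteq> {1..k}"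
  shows "proper_colouring (cycle_vertices k l e) (cycle_edges k l e) k (\<lambda>v. h (F v))"
  unfolding proper_colouring_def
proof
  show "(\<lambda>v. h (F v)) ` cycle_vertices k l e \<subseteq> {1..k}" using assms(2) Flt by auto
  show "\<forall>X\<in>cycle_edges k l e. \<forall>u\<in>X. \<forall>v\<in>X. u \<noteq> v \<longrightarrow> h (F u) \<noteq> h (F v)"
  proof (intro ballI impI)
    fix X u v assume "X \<in> cycle_edges k l e" "u \<in> X" "v \<in> X" "u \<noteq> v"
    then have "F u \<noteq> F v" by (rule edge_dist)
    then show "h (F u) \<noteq> h (F v)" using inj_onD[OF assms(1), of "F u" "F v"] Flt[of u] Flt[of v] by auto
  qed
qed

lemma chrom: assumes "0 < e" shows "chromatic_number (cycle_vertices k l e) (cycle_edges k l e) = k"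
  unfolding chromatic_number_def
proof (rule Least_equality)
  have "inj_on Suc {..<k}" "Suc ` {..<k} \<subseteq> {1..k}" by auto
  then show "\<exists>\<phi>. proper_colouring (cycle_vertices k l e) (cycle_edges k l e) k \<phi>"
    using proper by blast
next
  fix t assume "\<exists>\<phi>. proper_colouring (cycle_vertices k l e) (cycle_edges k l e) t \<phi>"
  then obtain \<phi> where ph: "proper_colouring (cycle_vertices k l e) (cycle_edges k l e) t \<phi>" by auto
  let ?X = "g 0 ` {..<k}"
  have X: "?X \<in> cycle_edges k l e" unfolding edge_eq using assms
    by (intro CollectI exI[of _ 0] conjI) auto
  have Xsub: "?X \<subseteq> cycle_vertices k l e" unfolding cycle_vertices_def using kn kpos by auto
  have "inj_on \<phi> ?X" using ph X unfolding proper_colouring_def inj_on_def by metis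
  then have "card (\<phi> ` ?X) = k" using g_inj[of 0] by (simp add: card_image)
  moreover have "\<phi> ` ?X \<subseteq> {1..t}" using ph Xsub unfolding proper_colouring_def by auto
  ultimately show "k \<le> t" using card_mono[of "{1..t}" "\<phi> ` ?X"] by simp
qed

end



lemma kl_ge_aux:
  fixes q d r :: nat assumes "0 < r" "r < d" "0 < q"
  shows "q*(q+1) \<le> ((q-1)*d+r) * (q*d+r)"
proof -
  have "q*1 \<le> q*d" using assms by (intro mult_le_mono2) simp
  then have a: "q + 1 \<le> q*d + r" using assms by linarith
  have "(q-1)*2 \<le> (q-1)*d" using assms by simp
  then have b: "q \<le> (q-1)*d + r" using assms by linarith
  show ?thesis using mult_le_mono[OF b a] .
qed



lemma n_eq:
  fixes q d r k l :: nat assumes "k = q*d + r" "r < d"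
  shows "(k*k*l + q + 1)*d = k*(k*l*d + 1) + (d - r)"
proof -
  have "(k*k*l + q + 1)*d + r = k*(k*l*d + 1) + d" using assms(1) by (simp add: algebra_simps)
  then show ?thesis using assms(2) by linarith
qed

lemma N1_bounds:
  fixes q d r k l :: nat assumes "k = q*d + r" "0 < r" "r < d" "0 < q" "0 < l"
  shows "q*(k*l*d + 2) \<le> k*k*l + q + 1" "k*k*l + q + 1 \<le> (q+1)*(k*l*d + 2)"
proof -
  have "q*1 \<le> q*d" using assms by (intro mult_le_mono2) simp
  then have kq: "q \<le> k" using assms by linarith
  have "k*1*1 \<le> k*l*r" using assms by (intro mult_le_mono) auto
  then have "k \<le> k*l*r" by simp
  then have "q \<le> k*l*r" using kq by linarith
  moreover have "k*k*l = k*l*(q*d) + k*l*r" using assms(1) by (simp add: algebra_simps)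
  ultimately show "q*(k*l*d + 2) \<le> k*k*l + q + 1" by (simp add: algebra_simps)
  have "k \<le> (q+1)*d" using assms by (simp add: algebra_simps)
  then have "k*(k*l) \<le> (q+1)*d*(k*l)" by (rule mult_le_mono1)
  then show "k*k*l + q + 1 \<le> (q+1)*(k*l*d + 2)" by (simp add: algebra_simps)
qed

lemma N2_bounds:
  fixes q d r k l :: nat assumes "k = q*d + r" "0 < r" "r < d" "0 < q" "0 < l"
  shows "q*(k*l*d + (d - r)) \<le> k*k*l + q + 1" "k*k*l + q + 1 \<le> (q+1)*(k*l*d + (d - r))"
proof -
  have f1: "q*(d-r) \<le> q*d" by (intro mult_le_mono2) simp
  have f2: "q*d \<le> k" using assms by simp
  have f3: "k*1*1 \<le> k*l*r" using assms by (intro mult_le_mono) auto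
  have "q*(d-r) \<le> k*l*r" using f1 f2 f3 by linarith
  moreover have "k*k*l = k*l*(q*d) + k*l*r" using assms(1) by (simp add: algebra_simps)
  ultimately show "q*(k*l*d + (d - r)) \<le> k*k*l + q + 1" by (simp add: algebra_simps)
  have "k \<le> (q+1)*d" using assms by (simp add: algebra_simps)
  then have "k*(k*l) \<le> (q+1)*d*(k*l)" by (rule mult_le_mono1)
  moreover have "(q+1)*1 \<le> (q+1)*(d-r)" using assms by (intro mult_le_mono2) simp
  ultimately show "k*k*l + q + 1 \<le> (q+1)*(k*l*d + (d - r))" by (simp add: algebra_simps)
qed

lemma r1_ineq:
  fixes q d k l :: nat assumes "k = q*d + 1" "2 \<le> d - 1" "0 < q" "0 < l"
  shows "(k*k*l + q + 1 - q*(k*l*d+2))*(q+1) \<le> ((q+1)*(k*l*d + (d - 1)) - (k*k*l + q + 1))*q"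
proof -
  define P where "P = k*l"
  have e: "k*k*l + q + 1 = P*q*d + P + q + 1" unfolding P_def using assms(1) by (simp add: algebra_simps)
  have qq: "q*(k*l*d+2) = P*q*d + 2*q" unfolding P_def by (simp add: algebra_simps)
  have A: "k*k*l + q + 1 - q*(k*l*d+2) \<le> P"
    unfolding e qq using assms(3) by linarith
  have B1: "(q+1)*(k*l*d + (d - 1)) = P*q*d + P*d + (q+1)*(d-1)" unfolding P_def by (simp add: algebra_simps)
  have pd: "P*d = P*(d-1) + P" using assms by (cases d) (auto simp: algebra_simps)
  have h: "q+1 \<le> (q+1)*(d-1)" using mult_le_mono2[of 1 "d-1" "q+1"] assms by simp
  have B: "P*(d-1) \<le> (q+1)*(k*l*d + (d - 1)) - (k*k*l + q + 1)"
    using B1 e pd h by linarith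
  have "P*(d-1)*q \<ge> P*2*q" using assms by (intro mult_le_mono1 mult_le_mono2) auto
  moreover have "P*(q+1) \<le> P*2*q" using assms by (simp add: algebra_simps)
  ultimately have "P*(q+1) \<le> P*(d-1)*q" by linarith
  moreover have "(k*k*l + q + 1 - q*(k*l*d+2))*(q+1) \<le> P*(q+1)" using A by (rule mult_le_mono1)
  moreover have "P*(d-1)*q \<le> ((q+1)*(k*l*d + (d - 1)) - (k*k*l + q + 1))*q" using B by (rule mult_le_mono1)
  ultimately show ?thesis by linarith
qed

lemma N_choice:
  fixes q k l e n N0 N :: nat
  assumes q: "0 < q" and k3: "3 \<le> k" and kl: "q*(q+1) \<le> l*k" and e: "k*k*l \<le> e"
    and n: "e \<le> n"
    and N0: "N0 = (e + q) div (q+1)" and N: "N = N0 + (n + (k-2)*N0) mod (k-1)"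
  shows "e \<le> (q+1)*N" "q*N \<le> e" "(k-1) dvd (n - N)" "N \<le> n"
proof -
  obtain j where kj: "k = j + 2" using k3 by (intro that[of "k-2"]) simp
  have k2: "k - 2 = j" using kj by simp
  have m1: "e + q = (q+1)*N0 + (e+q) mod (q+1)" unfolding N0 by (metis div_mult_mod_eq mult.commute)
  have m2: "(e+q) mod (q+1) \<le> q" by (metis Suc_eq_plus1 less_Suc_eq_le mod_less_divisor zero_less_Suc)
  have eN0: "e \<le> (q+1)*N0" using m1 m2 by linarith
  have N0e: "(q+1)*N0 \<le> e + q" using m1 by linarith
  have R: "(n + (k-2)*N0) mod (k-1) \<le> k - 2"
  proof -
    have "(n + (k-2)*N0) mod (k-1) < k - 1" using k3 by simp
    then show ?thesis by linarith
  qed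
  have "N0 \<le> N" unfolding N by simp
  then have "(q+1)*N0 \<le> (q+1)*N" by (rule mult_le_mono2)
  then show eN: "e \<le> (q+1)*N" using eN0 by linarith
  have key: "q*q + q*(q+1)*(k-2) \<le> e"
  proof -
    have "k*(q*(q+1)) \<le> k*(l*k)" using kl by (rule mult_le_mono2)
    moreover have "k*(l*k) = k*k*l" by (simp add: algebra_simps)
    moreover have "k*(q*(q+1)) = q*(q+1)*(k-2) + 2*(q*(q+1))"
      unfolding k2 kj by (simp add: algebra_simps)
    moreover have "q*q \<le> 2*(q*(q+1))" by (simp add: algebra_simps)
    ultimately show ?thesis using e by linarith
  qed
  have a: "(q+1)*(q*(N0 + (k-2))) = q*((q+1)*N0) + q*(q+1)*(k-2)" unfolding k2 by (simp add: algebra_simps)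
  have b: "q*((q+1)*N0) \<le> q*(e+q)" using N0e by (rule mult_le_mono2)
  have "(q+1)*(q*(N0 + (k-2))) \<le> (q+1)*e"
    using a b key by (simp add: algebra_simps)
  then have c: "q*(N0 + (k-2)) \<le> e" using mult_le_cancel1[of "q+1"] by (metis Suc_eq_plus1 zero_less_Suc mult_le_cancel1 less_numeral_extra(3))
  have "q*N \<le> q*(N0 + (k-2))" unfolding N using R by (intro mult_le_mono2) simp
  then show qN: "q*N \<le> e" using c by linarith
  have "N \<le> q*N" using q by simp
  then show Nn: "N \<le> n" using qN n by linarith
  have "N mod (k-1) = (N0 + (n + (k-2)*N0)) mod (k-1)" unfolding N by (simp add: mod_add_right_eq)
  also have "N0 + (n + (k-2)*N0) = n + (k-1)*N0" unfolding k2 using kj by (simp add: algebra_simps)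
  also have "(n + (k-1)*N0) mod (k-1) = n mod (k-1)" by simp
  finally show "(k-1) dvd (n - N)" using Nn mod_eq_dvd_iff_nat[of N n "k-1"] by simp
qed



lemma Ssum_pat1:
  assumes "a \<le> N" "j \<le> N"
  shows "Ssum (\<lambda>t. if t mod N < a then Suc q else q) j = (if j \<le> a then j * Suc q else a * Suc q + (j - a)*q)"
  using assms(2)
proof (induction j)
  case 0 then show ?case by (simp add: Ssum_def)
next
  case (Suc j)
  then have jN: "j mod N = j" by simp
  show ?case
  proof (cases "Suc j \<le> a")
    case True then show ?thesis using Suc jN by (simp add: Ssum_Suc)
  next
    case False
    then have ja: "a \<le> j" by simp
    have "Suc j - a = Suc (j - a)" using ja by simp
    moreover have "Ssum (\<lambda>t. if t mod N < a then Suc q else q) j = a * Suc q + (j - a)*q"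
      using Suc ja by (cases "j = a") auto
    ultimately show ?thesis using False jN ja by (simp add: Ssum_Suc)
  qed
qed

lemma Ssum_pat2:
  assumes "b \<le> N" "j \<le> N"
  shows "Ssum (\<lambda>t. if t mod N < b then q else Suc q) j = (if j \<le> b then j * q else b * q + (j - b)*Suc q)"
  using assms(2)
proof (induction j)
  case 0 then show ?case by (simp add: Ssum_def)
next
  case (Suc j)
  then have jN: "j mod N = j" by simp
  show ?case
  proof (cases "Suc j \<le> b")
    case True then show ?thesis using Suc jN by (simp add: Ssum_Suc)
  next
    case False
    then have ja: "b \<le> j" by simp
    have "Suc j - b = Suc (j - b)" using ja by simp
    moreover have "Ssum (\<lambda>t. if t mod N < b then q else Suc q) j = b * q + (j - b)*Suc q"
      using Suc ja by (cases "j = b") auto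
    ultimately show ?thesis using False jN ja by (simp add: Ssum_Suc)
  qed
qed

lemma pat1_zper:
  assumes "k = q*d + r" "0 < r" "r < d" "0 < q" "a \<le> N" "0 < N" "a * Suc q + (N - a)*q = e"
    "oL < r" "r \<le> oS" "oS < d"
  shows "zper k d q r (\<lambda>t. if t mod N < a then Suc q else q) (\<lambda>t. if t mod N < a then oL else oS) N e"
proof -
  have "Ssum (\<lambda>t. if t mod N < a then Suc q else q) N = e"
    using Ssum_pat1[of a N N q] assms by (cases "N \<le> a") auto
  then show ?thesis using assms by unfold_locales (auto split: if_splits)
qed

lemma pat2_zper:
  assumes "k = q*d + r" "0 < r" "r < d" "0 < q" "b \<le> N" "0 < N" "b * q + (N - b)*Suc q = e"
    "oL < r" "r \<le> oS" "oS < d"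
  shows "zper k d q r (\<lambda>t. if t mod N < b then q else Suc q) (\<lambda>t. if t mod N < b then oS else oL) N e"
proof -
  have "Ssum (\<lambda>t. if t mod N < b then q else Suc q) N = e"
    using Ssum_pat2[of b N N q] assms by (cases "N \<le> b") auto
  then show ?thesis using assms by unfold_locales (auto split: if_splits)
qed

context zper
begin

lemma S_decomp: "S (a*N + x) = a*e + S x"
proof (induction a)
  case 0 then show ?case by simp
next
  case (Suc a)
  have "S (Suc a * N + x) = S ((a*N + x) + N)" by (simp add: algebra_simps)
  also have "\<dots> = S (a*N + x) + e" by (rule S_per)
  finally show ?case using Suc by simp
qed

end

lemma single_special:
  assumes Z: "zper k d q r len off N e" and dl: "d = k - l" and kn: "k \<le> e*d" and e0: "0 < e"
    and dv: "(k-1) dvd (e*d - N)" and k2: "2 \<le> k"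
  shows "\<exists>F. hgcol k l e F \<and> card {v \<in> {..<e*d}. F v = 0} = N
     \<and> card {v \<in> {..<e*d}. F v = 1} = (e*d - N) div (k-1)"
proof -
  interpret zper k d q r len off N e by (rule Z)
  have dpos: "0 < d" using r by simp
  interpret Cs: spcol "e*d" 1 k d "\<lambda>v. v \<in> range (zpos d len off)" "\<lambda>v. 0"
  proof unfold_locales
    show "0 < e*d" using e0 dpos by simp
    show "1 < k" using k2 by simp
    show "\<And>v. (v + e * d \<in> range (zpos d len off)) = (v \<in> range (zpos d len off))" by (rule range_per)
    show "\<And>v. v \<in> range (zpos d len off) \<Longrightarrow> 0 < (1::nat)" by simp
    show "card {v \<in> {i * d..<i * d + k}. v \<in> range (zpos d len off) \<and> 0 = a} = 1" if "a < 1" for i a :: nat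
    proof -
      have "a = 0" using that by simp
      then show ?thesis using win_card[of i] by simp
    qed
    show "k - 1 dvd e * d - card {v \<in> {..<e * d}. v \<in> range (zpos d len off)}"
      using dv card_per by simp
  qed simp
  interpret H: hgcol k l e Cs.F
  proof unfold_locales
    show "k \<le> e * (k - l)" using kn dl by simp
    show "0 < k" using k2 by simp
    show "\<And>v. Cs.F (v + e * (k - l)) = Cs.F v" using Cs.F_per dl by simp
    show "\<And>v. Cs.F v < k" by (rule Cs.F_lt)
    show "\<And>i. i < e \<Longrightarrow> inj_on Cs.F {i * (k - l)..<i * (k - l) + k}" using Cs.F_inj dl by simp
  qed
  have c0: "card {v \<in> {..<e*d}. Cs.F v = 0} = N"
    using Cs.count_sp[of 0] card_per by simp
  have c1: "card {v \<in> {..<e*d}. Cs.F v = 1} = (e*d - N) div (k-1)"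
    using Cs.count_rest[of 0] Cs.M_eq card_per k2 by simp
  show ?thesis by (rule exI[of _ Cs.F], intro conjI H.hgcol_axioms c0 c1)
qed



lemma double_special:
  assumes Z1: "zper k d q r len1 off1 N1 e" and Z2: "zper k d q r len2 off2 N2 e"
    and disj: "\<And>t t'. zpos d len1 off1 t \<noteq> zpos d len2 off2 t'"
    and dl: "d = k - l" and kn: "k \<le> e*d" and e0: "0 < e"
    and dv: "(k-2) dvd (e*d - (N1 + N2))" and k3: "3 \<le> k"
  shows "\<exists>F. hgcol k l e F \<and> card {v \<in> {..<e*d}. F v = 0} = N1
     \<and> card {v \<in> {..<e*d}. F v = 2} = (e*d - (N1 + N2)) div (k-2)"
proof -
  interpret Z1: zper k d q r len1 off1 N1 e by (rule Z1)
  interpret Z2: zper k d q r len2 off2 N2 e by (rule Z2)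
  have dpos: "0 < d" using Z1.r by simp
  let ?z1 = "zpos d len1 off1" and ?z2 = "zpos d len2 off2"
  have dj: "v \<notin> range ?z1" if h2: "v \<in> range ?z2" for v
  proof
    assume "v \<in> range ?z1"
    then obtain t where "v = ?z1 t" by auto
    moreover obtain t' where "v = ?z2 t'" using h2 by auto
    ultimately show False using disj[of t t'] by simp
  qed
  have cs: "card {v \<in> {..<e*d}. v \<in> range ?z1 \<or> v \<in> range ?z2} = N1 + N2"
  proof -
    have "{v \<in> {..<e*d}. v \<in> range ?z1 \<or> v \<in> range ?z2} =
        {v \<in> {..<e*d}. v \<in> range ?z1} \<union> {v \<in> {..<e*d}. v \<in> range ?z2}" by auto
    moreover have "card ({v \<in> {..<e*d}. v \<in> range ?z1} \<union> {v \<in> {..<e*d}. v \<in> range ?z2}) =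
        card {v \<in> {..<e*d}. v \<in> range ?z1} + card {v \<in> {..<e*d}. v \<in> range ?z2}"
      by (rule card_Un_disjoint) (use dj in auto)
    ultimately show ?thesis using Z1.card_per Z2.card_per by simp
  qed
  interpret Cs: spcol "e*d" 2 k d "\<lambda>v. v \<in> range ?z1 \<or> v \<in> range ?z2"
     "\<lambda>v. if v \<in> range ?z1 then 0 else 1"
  proof unfold_locales
    show "0 < e*d" using e0 dpos by simp
    show "2 < k" using k3 by simp
    show "(v + e * d \<in> range ?z1 \<or> v + e * d \<in> range ?z2) = (v \<in> range ?z1 \<or> v \<in> range ?z2)" for v
      using Z1.range_per[of v] Z2.range_per[of v] by simp
    show "(if v + e * d \<in> range ?z1 then 0 else 1) = (if v \<in> range ?z1 then 0 else (1::nat))" for v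
      using Z1.range_per[of v] by simp
    show "(if v \<in> range ?z1 then 0 else 1) < (2::nat)" for v by simp
    show "card {v \<in> {i * d..<i * d + k}. (v \<in> range ?z1 \<or> v \<in> range ?z2) \<and>
             (if v \<in> range ?z1 then 0 else 1) = a} = 1" if "a < 2" for i a :: nat
    proof (cases "a = 0")
      case True
      have "{v \<in> {i * d..<i * d + k}. (v \<in> range ?z1 \<or> v \<in> range ?z2) \<and>
             (if v \<in> range ?z1 then 0 else 1) = a} = {v \<in> {i * d..<i * d + k}. v \<in> range ?z1}"
        using True by auto
      then show ?thesis using Z1.win_card[of i] by simp
    next
      case False
      then have a1: "a = 1" using that by simp
      have "{v \<in> {i * d..<i * d + k}. (v \<in> range ?z1 \<or> v \<in> range ?z2) \<and>
             (if v \<in> range ?z1 then 0 else 1) = a} = {v \<in> {i * d..<i * d + k}. v \<in> range ?z2}"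
        using a1 dj by auto
      then show ?thesis using Z2.win_card[of i] by simp
    qed
    show "k - 2 dvd e * d - card {v \<in> {..<e * d}. v \<in> range ?z1 \<or> v \<in> range ?z2}"
      using dv cs by simp
  qed
  interpret H: hgcol k l e Cs.F
  proof unfold_locales
    show "k \<le> e * (k - l)" using kn dl by simp
    show "0 < k" using k3 by simp
    show "\<And>v. Cs.F (v + e * (k - l)) = Cs.F v" using Cs.F_per dl by simp
    show "\<And>v. Cs.F v < k" by (rule Cs.F_lt)
    show "\<And>i. i < e \<Longrightarrow> inj_on Cs.F {i * (k - l)..<i * (k - l) + k}" using Cs.F_inj dl by simp
  qed
  have c0: "card {v \<in> {..<e*d}. Cs.F v = 0} = N1"
  proof -
    have "{v \<in> {..<e*d}. (v \<in> range ?z1 \<or> v \<in> range ?z2) \<and> (if v \<in> range ?z1 then 0 else 1) = (0::nat)}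
       = {v \<in> {..<e*d}. v \<in> range ?z1}" by auto
    then show ?thesis using Cs.count_sp[of 0] Z1.card_per by simp
  qed
  have c2: "card {v \<in> {..<e*d}. Cs.F v = 2} = (e*d - (N1 + N2)) div (k-2)"
    using Cs.count_rest[of 0] Cs.M_eq cs k3 by simp
  show ?thesis by (rule exI[of _ Cs.F], intro conjI H.hgcol_axioms c0 c2)
qed

lemma no_eq:
  fixes A B e x y :: nat assumes "x < y" "y \<le> e" "0 < x"
  shows "A*e + x \<noteq> B*e + y"
proof (cases "A \<le> B")
  case True
  then have "A*e \<le> B*e" by (rule mult_le_mono1)
  then show ?thesis using assms by linarith
next
  case False
  then have "Suc B * e \<le> A*e" by (intro mult_le_mono1) simp
  then have "B*e + e \<le> A*e" by simp
  then show ?thesis using assms by linarith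
qed

lemma hgcd_one:
  assumes "proper_colouring V E (chromatic_number V E) \<phi>"
    and "card {v \<in> V. \<phi> v = 1} = Suc T" "card {v \<in> V. \<phi> v = 2} = T"
  shows "hgcd V E = 1"
proof -
  have h: "1 = nat \<bar>int (card {v \<in> V. \<phi> v = 1}) - int (card {v \<in> V. \<phi> v = 2})\<bar>"
    using assms(2,3) by simp
  have one: "1 \<in> colour_diffs V E" unfolding colour_diffs_def
    by (rule CollectI, rule exI[of _ \<phi>], rule conjI[OF h assms(1)])
  then have ne: "colour_diffs V E - {0} \<noteq> {}" by auto
  have "Gcd (colour_diffs V E - {0}) dvd 1" using one by (intro Gcd_dvd) simp
  then have "Gcd (colour_diffs V E - {0}) = 1" by simp
  then show ?thesis unfolding hgcd_def using ne by (simp add: one_enat_def)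
qed

lemma ceil_lemma:
  fixes k d q r :: nat assumes "k = q*d + r" "0 < r" "r < d"
  shows "\<lceil>real k / real d\<rceil> = int q + 1"
proof (rule ceiling_unique)
  have d0: "0 < real d" using assms by simp
  have "real q * real d < real k" using assms by simp
  then show "real_of_int (int q + 1) - 1 < real k / real d" using d0 by (simp add: field_simps)
  have "real k \<le> (real q + 1) * real d" using assms by (simp add: algebra_simps)
  then show "real k / real d \<le> real_of_int (int q + 1)" using d0 by (simp add: field_simps)
qed



lemma pat_disjoint:
  assumes kq: "k = q*d + r" and r0: "0 < r" and rd: "r < d" and q0: "0 < q" and s2: "2 \<le> d - r"
    and a1: "a1 \<le> N1" "0 < N1" "a1 * Suc q + (N1 - a1)*q = e"
    and b2: "b2 \<le> N2" "0 < N2" "b2 * q + (N2 - b2)*Suc q = e"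
    and r1: "r = 1 \<Longrightarrow> a1 * Suc q \<le> b2 * q"
  shows "zpos d (\<lambda>t. if t mod N1 < a1 then Suc q else q) (\<lambda>t. if t mod N1 < a1 then 0 else d - 1) t
    \<noteq> zpos d (\<lambda>t. if t mod N2 < b2 then q else Suc q) (\<lambda>t. if t mod N2 < b2 then r else r - 1) t'"
    (is "?z1 t \<noteq> ?z2 t'")
proof
  let ?len1 = "\<lambda>t. if t mod N1 < a1 then Suc q else q"
  let ?len2 = "\<lambda>t. if t mod N2 < b2 then q else Suc q"
  let ?off1 = "\<lambda>t. if t mod N1 < a1 then 0 else d - 1"
  let ?off2 = "\<lambda>t. if t mod N2 < b2 then r else r - 1"
  interpret Z1: zper k d q r ?len1 ?off1 N1 e
    by (rule pat1_zper) (use assms in auto)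
  interpret Z2: zper k d q r ?len2 ?off2 N2 e
    by (rule pat2_zper) (use assms in auto)
  assume eq: "?z1 t = ?z2 t'"
  have m: "?off1 t = ?off2 t'" using Z1.z_mod[of t] Z2.z_mod[of t'] eq by simp
  have L1: "t mod N1 < a1" and L2: "\<not> t' mod N2 < b2" and rr: "r = 1"
  proof -
    have "t mod N1 < a1 \<and> \<not> t' mod N2 < b2 \<and> r = 1"
      using m r0 rd s2 by (auto split: if_splits)
    then show "t mod N1 < a1" "\<not> t' mod N2 < b2" "r = 1" by auto
  qed
  have dv: "Z1.S (Suc t) - 1 = Z2.S (Suc t') - 1" using Z1.z_div[of t] Z2.z_div[of t'] eq by simp
  have p1: "Z1.S (Suc t) \<ge> 1" using Z1.len_pos[of t] by (simp add: Ssum_Suc)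
  have p2: "Z2.S (Suc t') \<ge> 1" using Z2.len_pos[of t'] by (simp add: Ssum_Suc)
  have SS: "Z1.S (Suc t) = Z2.S (Suc t')" using dv p1 p2 by linarith
  define t0 where "t0 = t mod N1"
  define s0 where "s0 = t' mod N2"
  have t0: "t0 < a1" "Suc t0 \<le> N1" using L1 a1 unfolding t0_def by auto
  have "t' mod N2 < N2" using b2(2) by simp
  then have s0: "b2 \<le> s0" "Suc s0 \<le> N2" using L2 unfolding s0_def by auto
  have e1: "Z1.S (Suc t) = (t div N1) * e + Z1.S (Suc t0)"
  proof -
    have "Suc t = (t div N1) * N1 + Suc t0" unfolding t0_def by simp
    then show ?thesis using Z1.S_decomp[of "t div N1" "Suc t0"] by metis
  qed
  have e2: "Z2.S (Suc t') = (t' div N2) * e + Z2.S (Suc s0)"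
  proof -
    have "Suc t' = (t' div N2) * N2 + Suc s0" unfolding s0_def by simp
    then show ?thesis using Z2.S_decomp[of "t' div N2" "Suc s0"] by metis
  qed
  have x: "Z1.S (Suc t0) = Suc t0 * Suc q" using Ssum_pat1[of a1 N1 "Suc t0" q] t0 a1 by simp
  have y: "Z2.S (Suc s0) = b2 * q + (Suc s0 - b2) * Suc q" using Ssum_pat2[of b2 N2 "Suc s0" q] s0 b2 by simp
  have x1: "Suc t0 * Suc q \<le> a1 * Suc q" using t0 by (intro mult_le_mono1) simp
  have y1: "b2 * q + Suc q \<le> Z2.S (Suc s0)"
  proof -
    have "1 * Suc q \<le> (Suc s0 - b2) * Suc q" using s0 by (intro mult_le_mono1) simp
    then show ?thesis using y by simp
  qed
  have ye: "Z2.S (Suc s0) \<le> e" using Ssum_mono[of "Suc s0" N2 ?len2] s0 Z2.SN by simp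
  have "Z1.S (Suc t0) < Z2.S (Suc s0)" using x x1 y1 r1[OF rr] by linarith
  moreover have "0 < Z1.S (Suc t0)" using x by simp
  ultimately show False using no_eq[of "Z1.S (Suc t0)" "Z2.S (Suc s0)" e "t div N1" "t' div N2"] ye SS e1 e2
    by simp
qed



lemma pat_arith:
  fixes q N e :: nat assumes "q*N \<le> e" "e \<le> (q+1)*N"
  shows "e - q*N \<le> N" "(e - q*N) * Suc q + (N - (e - q*N))*q = e"
    "((q+1)*N - e) \<le> N" "((q+1)*N - e) * q + (N - ((q+1)*N - e))*Suc q = e"
proof -
  define a where "a = e - q*N"
  define b where "b = (q+1)*N - e"
  have ea: "e = q*N + a" unfolding a_def using assms by simp
  have nb: "(q+1)*N = e + b" unfolding b_def using assms by simp
  have N: "N = a + b" using ea nb by (simp add: algebra_simps)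
  then show "e - q*N \<le> N" "((q+1)*N - e) \<le> N" unfolding a_def[symmetric] b_def[symmetric] by simp_all
  have "N - a = b" "N - b = a" using N by simp_all
  moreover have "a * Suc q + b*q = e" "b*q + a * Suc q = e" using ea N by (simp_all add: algebra_simps)
  ultimately show "(e - q*N) * Suc q + (N - (e - q*N))*q = e"
    "((q+1)*N - e) * q + (N - ((q+1)*N - e))*Suc q = e" unfolding a_def[symmetric] b_def[symmetric] by simp_all
qed

theorem lemma5p3:
  fixes k l m :: nat
  assumes "1 \<le> l" and "l \<le> k - 1" and "\<not> (k - l) dvd k"
    and "int m \<ge> \<lceil>real k / real (k - l)\<rceil>"
  shows "k_partite (cycle_vertices k l (k^2 * l + m)) (cycle_edges k l (k^2 * l + m)) k
       \<and> (int m = \<lceil>real k / real (k - l)\<rceil> \<longrightarrow>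
            hgcd (cycle_vertices k l (k^2 * l + m)) (cycle_edges k l (k^2 * l + m)) = 1)"
proof -
  define d where "d = k - l"
  have k2: "2 \<le> k" using assms(1,2) by simp
  have dk: "d < k" "1 \<le> d" unfolding d_def using assms(1,2) by auto
  have d1: "d \<noteq> 1" using assms(3) unfolding d_def by auto
  have d2: "2 \<le> d" using dk d1 by simp
  have ld: "l = k - d" unfolding d_def using assms(1,2) by simp
  define q where "q = k div d"
  define r where "r = k mod d"
  have kqr: "k = q*d + r" unfolding q_def r_def by simp
  have r0: "0 < r" using assms(3) unfolding r_def d_def by (simp add: dvd_eq_mod_eq_0)
  have rd: "r < d" unfolding r_def using dk by simp
  have q0: "0 < q"
  proof (rule ccontr)
    assume "\<not> 0 < q" then have "k = r" using kqr by simp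
    then show False using rd dk by simp
  qed
  have k3: "3 \<le> k"
  proof -
    have "q*2 \<le> q*d" using d2 by simp
    then show ?thesis using kqr q0 r0 by linarith
  qed
  have lq: "l = (q-1)*d + r"
  proof -
    have "q*d = (q-1)*d + d" using q0 by (cases q) auto
    then show ?thesis using ld kqr by simp
  qed
  have l0: "0 < l" using assms(1) by simp
  have ceil: "\<lceil>real k / real (k - l)\<rceil> = int q + 1"
    using ceil_lemma[OF kqr r0 rd] unfolding d_def by simp
  have mq: "q + 1 \<le> m" using assms(4) ceil by simp
  define e where "e = k^2 * l + m"
  have kk: "k^2 = k*k" by (simp add: power2_eq_square)
  have kl: "q*(q+1) \<le> l*k" using kl_ge_aux[OF r0 rd q0] lq kqr by (simp add: mult.commute)
  have ekkl: "k*k*l \<le> e" unfolding e_def kk by simp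
  have "k*1*1 \<le> k*k*l" using k2 l0 by (intro mult_le_mono) auto
  then have ke: "k \<le> e" using ekkl by linarith
  have een: "e \<le> e*d" using dk by simp
  have kn: "k \<le> e*d" using ke een by linarith
  have e0: "0 < e" using ke k2 by simp
  have n_def: "cycle_vertices k l e = {..<e*d}" unfolding cycle_vertices_def d_def by simp
  define N0 where "N0 = (e + q) div (q+1)"
  define N where "N = N0 + (e*d + (k-2)*N0) mod (k-1)"
  have NB: "e \<le> (q+1)*N" "q*N \<le> e" "(k-1) dvd (e*d - N)" "N \<le> e*d"
    using N_choice[OF q0 k3 kl ekkl een N0_def N_def] by auto
  have N0': "0 < N"
  proof (rule ccontr)
    assume "\<not> 0 < N" then show False using NB(1) e0 by simp
  qed
  have Z: "zper k d q r (\<lambda>t. if t mod N < e - q*N then Suc q else q)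
      (\<lambda>t. if t mod N < e - q*N then 0 else d - 1) N e"
    by (rule pat1_zper[OF kqr r0 rd q0]) (use pat_arith[OF NB(2) NB(1)] N0' r0 rd in auto)
  obtain F where "hgcol k l e F"
    using single_special[OF Z d_def kn e0 NB(3) k2] by blast
  then interpret H1: hgcol k l e F .
  have part1: "k_partite (cycle_vertices k l e) (cycle_edges k l e) k" by (rule H1.kpart)
  have part2: "hgcd (cycle_vertices k l e) (cycle_edges k l e) = 1"
    if mm: "int m = \<lceil>real k / real (k - l)\<rceil>"
  proof -
    have m: "m = q + 1" using mm ceil by simp
    have e': "e = k*k*l + q + 1" unfolding e_def kk m by simp
    define T where "T = k*l*d + 1"
    have neq: "e*d = k*T + (d - r)" unfolding e' T_def using n_eq[OF kqr rd] by simp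
    have B1: "q*(k*l*d + 2) \<le> e" "e \<le> (q+1)*(k*l*d + 2)"
      using N1_bounds[OF kqr r0 rd q0 l0] unfolding e' by simp_all
    have Z1: "zper k d q r (\<lambda>t. if t mod (k*l*d + 2) < e - q*(k*l*d + 2) then Suc q else q)
      (\<lambda>t. if t mod (k*l*d + 2) < e - q*(k*l*d + 2) then 0 else d - 1) (k*l*d + 2) e"
      by (rule pat1_zper[OF kqr r0 rd q0]) (use pat_arith[OF B1] r0 rd in auto)
    show ?thesis
    proof (cases "d - r = 1")
      case True
      have dv: "(k-1) dvd (e*d - (k*l*d + 2))"
      proof -
        have "e*d - (k*l*d + 2) = (k-1)*T" unfolding neq True T_def using k2
          by (cases k) (auto simp: algebra_simps)
        then show ?thesis by simp
      qed
      obtain G where G: "hgcol k l e G" "card {v \<in> {..<e*d}. G v = 0} = k*l*d + 2"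
        "card {v \<in> {..<e*d}. G v = 1} = (e*d - (k*l*d + 2)) div (k-1)"
        using single_special[OF Z1 d_def kn e0 dv k2] by blast
      interpret H2: hgcol k l e G by (rule G(1))
      have pc: "proper_colouring (cycle_vertices k l e) (cycle_edges k l e) k (\<lambda>v. Suc (G v))"
        by (rule H2.proper) auto
      have ch: "chromatic_number (cycle_vertices k l e) (cycle_edges k l e) = k" using H2.chrom e0 by simp
      have c1: "card {v \<in> cycle_vertices k l e. Suc (G v) = 1} = Suc T"
        using G(2) unfolding n_def T_def by simp
      have "(e*d - (k*l*d + 2)) div (k-1) = T"
      proof -
        have "e*d - (k*l*d + 2) = (k-1)*T" unfolding neq True T_def using k2
          by (cases k) (auto simp: algebra_simps)
        then show ?thesis using k2 by simp
      qed
      then have c2: "card {v \<in> cycle_vertices k l e. Suc (G v) = 2} = T"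
        using G(3) unfolding n_def by simp
      show ?thesis using hgcd_one[of "cycle_vertices k l e" "cycle_edges k l e" "\<lambda>v. Suc (G v)" T]
        pc ch c1 c2 by simp
    next
      case False
      then have s2: "2 \<le> d - r" using rd by simp
      define N2 where "N2 = k*l*d + (d - r)"
      have N2pos: "0 < N2" unfolding N2_def using s2 by simp
      have B2: "q*N2 \<le> e" "e \<le> (q+1)*N2"
        using N2_bounds[OF kqr r0 rd q0 l0] unfolding e' N2_def by simp_all
      have Z2: "zper k d q r (\<lambda>t. if t mod N2 < (q+1)*N2 - e then q else Suc q)
        (\<lambda>t. if t mod N2 < (q+1)*N2 - e then r else r - 1) N2 e"
        by (rule pat2_zper[OF kqr r0 rd q0]) (use pat_arith[OF B2] N2pos r0 rd in auto)
      have r1: "(e - q*(k*l*d + 2)) * Suc q \<le> ((q+1)*N2 - e) * q" if "r = 1"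
        using r1_ineq[of k q d l] kqr that s2 q0 l0 unfolding e' N2_def by simp
      have disj: "zpos d (\<lambda>t. if t mod (k*l*d + 2) < e - q*(k*l*d + 2) then Suc q else q)
        (\<lambda>t. if t mod (k*l*d + 2) < e - q*(k*l*d + 2) then 0 else d - 1) t
        \<noteq> zpos d (\<lambda>t. if t mod N2 < (q+1)*N2 - e then q else Suc q)
        (\<lambda>t. if t mod N2 < (q+1)*N2 - e then r else r - 1) t'" for t t'
        using pat_disjoint[OF kqr r0 rd q0 s2 pat_arith(1)[OF B1] _ pat_arith(2)[OF B1]
           pat_arith(3)[OF B2] N2pos pat_arith(4)[OF B2] r1] by simp
      have TT: "e*d - (k*l*d + 2 + N2) = (k-2)*T"
        unfolding neq N2_def T_def using k3 s2 by (cases k) (auto simp: algebra_simps)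
      have dv: "(k-2) dvd (e*d - (k*l*d + 2 + N2))" unfolding TT by simp
      obtain G where G: "hgcol k l e G" "card {v \<in> {..<e*d}. G v = 0} = k*l*d + 2"
        "card {v \<in> {..<e*d}. G v = 2} = (e*d - (k*l*d + 2 + N2)) div (k-2)"
        using double_special[OF Z1 Z2 disj d_def kn e0 dv k3] by blast
      interpret H2: hgcol k l e G by (rule G(1))
      define h where "h = (\<lambda>x::nat. if x = 1 then 3 else if x = 2 then 2 else Suc x)"
      have hinj: "inj_on h {..<k}" unfolding h_def inj_on_def by auto
      have hrange: "h ` {..<k} \<subseteq> {1..k}" unfolding h_def using k3 by auto
      have pc: "proper_colouring (cycle_vertices k l e) (cycle_edges k l e) k (\<lambda>v. h (G v))"
        by (rule H2.proper[OF hinj hrange])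
      have ch: "chromatic_number (cycle_vertices k l e) (cycle_edges k l e) = k" using H2.chrom e0 by simp
      have "{v \<in> cycle_vertices k l e. h (G v) = 1} = {v \<in> {..<e*d}. G v = 0}"
        unfolding n_def h_def by auto
      then have c1: "card {v \<in> cycle_vertices k l e. h (G v) = 1} = Suc T"
        using G(2) unfolding T_def by simp
      have "{v \<in> cycle_vertices k l e. h (G v) = 2} = {v \<in> {..<e*d}. G v = 2}"
        unfolding n_def h_def by auto
      moreover have "(e*d - (k*l*d + 2 + N2)) div (k-2) = T" unfolding TT using k3 by simp
      ultimately have c2: "card {v \<in> cycle_vertices k l e. h (G v) = 2} = T"
        using G(3) by simp
      show ?thesis using hgcd_one[of "cycle_vertices k l e" "cycle_edges k l e" "\<lambda>v. h (G v)" T]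
        pc ch c1 c2 by simp
    qed
  qed
  show ?thesis using part1 part2 unfolding e_def by simp
qed



end
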